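(* Let $\tau>0$ and $f\in C(\mathbb R_+\times\mathbb R,\mathbb R)$ be regular and asymptotically $\tau$-periodic in time, $f=P+R$. Assume the $\tau$-periodic solutions of $x'=P(t,x)$ are isolated, and that for some $u_0$ the solution $\varphi(t,u_0,f)$ of $x'=f(t,x)$, $x(0)=u_0$, is bounded on $\mathbb R_+$. Then $\varphi(t,u_0,f)$ is asymptotically $\tau$-periodic: there is a continuous $\tau$-periodic $p:\mathbb R_+\to\mathbb R$ with $\varphi(t,u_0,f)-p(t)\to0$ as $t\to+\infty$.
   Context: $C(\mathbb R_+\times\mathbb R,\mathbb R)$ has the compact-open topology; $f^h(t,x)=f(t+h,x)$; $H(f)$ is the closure of $\{f^h:h\ge0\}$. $f$ is regular if for every $g\in H(f)$ and $v\in\mathbb R$ the equation $y'=g(t,y)$ has a unique solution $\varphi(t,v,g)$ with $\varphi(0,v,g)=v$, defined on $\mathbb R_+$. $f$ is asymptotically $\tau$-periodic in time if $f=P+R$ with $P,R$ continuous, $P(t+\tau,x)=P(t,x)$, and $R(t,x)\to0$ as $t\to+\infty$ uniformly in $x$ on compact sets. A $\tau$-periodic solution $\varphi(t,u_0,P)$ (i.e. $\varphi(\tau,u_0,P)=u_0$) of $x'=P(t,x)$ is isolated if there is $\delta>0$ such that no $u\ne u_0$ with $|u-u_0|<\delta$ gives a $\tau$-periodic solution $\varphi(t,u,P)$. *)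

theory Defs
  imports "HOL-Analysis.Analysis"
begin

text \<open>Functions R+ x R -> R are represented as curried functions real => real => real;
  only their values on {0..} x UNIV matter.\<close>

definition cont_RR :: "(real \<Rightarrow> real \<Rightarrow> real) \<Rightarrow> bool" where
  "cont_RR f \<longleftrightarrow> continuous_on ({0..} \<times> UNIV) (\<lambda>(t,x). f t x)"

definition shift :: "real \<Rightarrow> (real \<Rightarrow> real \<Rightarrow> real) \<Rightarrow> (real \<Rightarrow> real \<Rightarrow> real)" where
  "shift h f = (\<lambda>t x. f (t + h) x)"

text \<open>Hull: closure of the positive translates in the compact-open topology
  (basic neighbourhoods of g: sup over a compact K of |k - g| < e).\<close>
definition hull_H :: "(real \<Rightarrow> real \<Rightarrow> real) \<Rightarrow> (real \<Rightarrow> real \<Rightarrow> real) set" where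
  "hull_H f = {g. cont_RR g \<and>
     (\<forall>K e. compact K \<and> K \<subseteq> {0..} \<times> UNIV \<and> e > 0 \<longrightarrow>
        (\<exists>h\<ge>0. \<forall>(t,x)\<in>K. \<bar>shift h f t x - g t x\<bar> < e))}"

definition is_solution :: "(real \<Rightarrow> real \<Rightarrow> real) \<Rightarrow> real \<Rightarrow> (real \<Rightarrow> real) \<Rightarrow> bool" where
  "is_solution g v y \<longleftrightarrow> y 0 = v \<and>
     (\<forall>t\<ge>0. (y has_real_derivative g t (y t)) (at t within {0..}))"

definition regular :: "(real \<Rightarrow> real \<Rightarrow> real) \<Rightarrow> bool" where
  "regular f \<longleftrightarrow> (\<forall>g\<in>hull_H f. \<forall>v. \<exists>y. is_solution g v y \<and>
      (\<forall>z. is_solution g v z \<longrightarrow> (\<forall>t\<ge>0. z t = y t)))"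

definition asympt_periodic_decomp ::
  "real \<Rightarrow> (real \<Rightarrow> real \<Rightarrow> real) \<Rightarrow> (real \<Rightarrow> real \<Rightarrow> real) \<Rightarrow> (real \<Rightarrow> real \<Rightarrow> real) \<Rightarrow> bool" where
  "asympt_periodic_decomp \<tau> f P R \<longleftrightarrow> cont_RR P \<and> cont_RR R \<and>
     (\<forall>t\<ge>0. \<forall>x. f t x = P t x + R t x) \<and>
     (\<forall>t\<ge>0. \<forall>x. P (t + \<tau>) x = P t x) \<and>
     (\<forall>K e. compact K \<and> e > 0 \<longrightarrow> (\<exists>T. \<forall>t\<ge>T. \<forall>x\<in>K. \<bar>R t x\<bar> < e))"

definition periodic_solutions_isolated :: "real \<Rightarrow> (real \<Rightarrow> real \<Rightarrow> real) \<Rightarrow> bool" where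
  "periodic_solutions_isolated \<tau> P \<longleftrightarrow>
     (\<forall>w y. is_solution P w y \<and> y \<tau> = w \<longrightarrow>
        (\<exists>\<delta>>0. \<forall>u z. u \<noteq> w \<and> \<bar>u - w\<bar> < \<delta> \<and> is_solution P u z \<longrightarrow> z \<tau> \<noteq> u))"

end

theory Submission imports Defs "HOL-Complex_Analysis.Great_Picard" begin

lemma side_lemma:
  fixes x :: "nat \<Rightarrow> real" and \<Phi> :: "real \<Rightarrow> real"
  assumes mono: "\<And>a b. a \<le> b \<Longrightarrow> \<Phi> a \<le> \<Phi> b"
    and close: "(\<lambda>n. x (Suc n) - \<Phi> (x n)) \<longlonglongrightarrow> 0"
    and nf: "\<Phi> c \<noteq> c"
    and lo: "\<forall>N. \<exists>n\<ge>N. x n < c" and hi: "\<forall>N. \<exists>n\<ge>N. x n > c"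
  shows False
proof -
  define \<eta> where "\<eta> = \<bar>\<Phi> c - c\<bar>"
  have \<eta>: "\<eta> > 0" using nf by (simp add: \<eta>_def)
  obtain N where N: "\<forall>n\<ge>N. norm (x (Suc n) - \<Phi> (x n) - 0) < \<eta>"
    using close \<eta> unfolding LIMSEQ_iff by blast
  have N': "\<bar>x (Suc n) - \<Phi> (x n)\<bar> < \<eta>" if "n \<ge> N" for n using N that by simp
  consider "\<Phi> c > c" | "\<Phi> c < c" using nf by linarith
  thus False
  proof cases
    case 1
    have stay: "x (n + j) \<ge> c" if n: "n \<ge> N" "x n \<ge> c" for n j
    proof (induction j)
      case 0 thus ?case using n by simp
    next
      case (Suc j)
      have "\<Phi> (x (n + j)) \<ge> \<Phi> c" using mono Suc by blast
      moreover have "\<bar>x (Suc (n + j)) - \<Phi> (x (n + j))\<bar> < \<eta>" using N' n by simp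
      ultimately show ?case using 1 by (simp add: \<eta>_def)
    qed
    obtain n where n: "n \<ge> N" "x n > c" using hi by blast
    obtain m where m: "m \<ge> n" "x m < c" using lo by blast
    have "x (n + (m - n)) \<ge> c" using stay n by simp
    with m show False by simp
  next
    case 2
    have stay: "x (n + j) \<le> c" if n: "n \<ge> N" "x n \<le> c" for n j
    proof (induction j)
      case 0 thus ?case using n by simp
    next
      case (Suc j)
      have "\<Phi> (x (n + j)) \<le> \<Phi> c" using mono Suc by blast
      moreover have "\<bar>x (Suc (n + j)) - \<Phi> (x (n + j))\<bar> < \<eta>" using N' n by simp
      ultimately show ?case using 2 by (simp add: \<eta>_def)
    qed
    obtain n where n: "n \<ge> N" "x n < c" using lo by blast
    obtain m where m: "m \<ge> n" "x m > c" using hi by blast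
    have "x (n + (m - n)) \<le> c" using stay n by simp
    with m show False by simp
  qed
qed

lemma discrete_conv:
  fixes x :: "nat \<Rightarrow> real" and \<Phi> :: "real \<Rightarrow> real"
  assumes mono: "\<And>a b. a \<le> b \<Longrightarrow> \<Phi> a \<le> \<Phi> b"
    and close: "(\<lambda>n. x (Suc n) - \<Phi> (x n)) \<longlonglongrightarrow> 0"
    and bdd: "bounded (range x)"
    and isol: "\<And>w. \<Phi> w = w \<Longrightarrow> \<exists>\<delta>>0. \<forall>u. u \<noteq> w \<and> \<bar>u - w\<bar> < \<delta> \<longrightarrow> \<Phi> u \<noteq> u"
  shows "\<exists>l. x \<longlonglongrightarrow> l"
proof -
  obtain l r where r: "strict_mono (r :: nat \<Rightarrow> nat)" "(x \<circ> r) \<longlonglongrightarrow> l"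
    using bounded_imp_convergent_subsequence[OF bdd] by blast
  have near: "\<exists>n\<ge>N. \<bar>x n - l\<bar> < \<epsilon>" if ep: "\<epsilon> > 0" for N \<epsilon>
  proof -
    obtain K where K: "\<forall>k\<ge>K. norm ((x \<circ> r) k - l) < \<epsilon>" using r(2) ep unfolding LIMSEQ_iff by blast
    have "\<bar>x (r (max K N)) - l\<bar> < \<epsilon>" using K by simp
    moreover have "r (max K N) \<ge> N" using seq_suble[OF r(1), of "max K N"] by simp
    ultimately show ?thesis by blast
  qed
  have fixpt: "\<Phi> c = c" if c: "\<forall>N. \<exists>n\<ge>N. x n < c" "\<forall>N. \<exists>n\<ge>N. x n > c" for c
    using side_lemma[OF mono close _ c] by blast
  have "x \<longlonglongrightarrow> l"
  proof (rule ccontr)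
    assume "\<not> x \<longlonglongrightarrow> l"
    then obtain e where e: "e > 0" "\<forall>N. \<exists>n\<ge>N. \<not> norm (x n - l) < e"
      unfolding LIMSEQ_iff by blast
    hence e': "\<forall>N. \<exists>n\<ge>N. \<bar>x n - l\<bar> \<ge> e" by (simp add: not_less)
    have "(\<forall>N. \<exists>n\<ge>N. x n \<ge> l + e) \<or> (\<forall>N. \<exists>n\<ge>N. x n \<le> l - e)"
    proof (rule ccontr)
      assume "\<not> ?thesis"
      then obtain N1 N2 where N1: "\<forall>n\<ge>N1. x n < l + e" and N2: "\<forall>n\<ge>N2. x n > l - e"
        by (meson not_le)
      obtain n where n: "n \<ge> max N1 N2" "\<bar>x n - l\<bar> \<ge> e" using e' by blast
      thus False using N1 N2 by (auto simp: abs_if split: if_splits)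
    qed
    thus False
    proof
      assume A: "\<forall>N. \<exists>n\<ge>N. x n \<ge> l + e"
      have fx: "\<Phi> c = c" if c: "l < c" "c < l + e" for c
      proof (rule fixpt)
        show "\<forall>N. \<exists>n\<ge>N. x n < c"
        proof
          fix N obtain n where "n \<ge> N" "\<bar>x n - l\<bar> < c - l" using near[of "c - l" N] c by auto
          thus "\<exists>n\<ge>N. x n < c" by (intro exI[of _ n]) auto
        qed
        show "\<forall>N. \<exists>n\<ge>N. x n > c"
        proof
          fix N obtain n where "n \<ge> N" "x n \<ge> l + e" using A by blast
          thus "\<exists>n\<ge>N. x n > c" using c by (intro exI[of _ n]) auto
        qed
      qed
      define c0 where "c0 = l + e/2"
      have "\<Phi> c0 = c0" using fx e by (simp add: c0_def)
      then obtain \<delta> where \<delta>: "\<delta> > 0" "\<forall>u. u \<noteq> c0 \<and> \<bar>u - c0\<bar> < \<delta> \<longrightarrow> \<Phi> u \<noteq> u"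
        using isol by blast
      define u where "u = c0 + min \<delta> (e/2) / 2"
      have "\<Phi> u = u" using fx \<delta> e by (simp add: u_def c0_def)
      moreover have "u \<noteq> c0 \<and> \<bar>u - c0\<bar> < \<delta>" using \<delta> e by (auto simp: u_def min_def)
      ultimately show False using \<delta>(2) by blast
    next
      assume B: "\<forall>N. \<exists>n\<ge>N. x n \<le> l - e"
      have fx: "\<Phi> c = c" if c: "l - e < c" "c < l" for c
      proof (rule fixpt)
        show "\<forall>N. \<exists>n\<ge>N. x n > c"
        proof
          fix N obtain n where "n \<ge> N" "\<bar>x n - l\<bar> < l - c" using near[of "l - c" N] c by auto
          thus "\<exists>n\<ge>N. x n > c" by (intro exI[of _ n]) auto
        qed
        show "\<forall>N. \<exists>n\<ge>N. x n < c"
        proof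
          fix N obtain n where "n \<ge> N" "x n \<le> l - e" using B by blast
          thus "\<exists>n\<ge>N. x n < c" using c by (intro exI[of _ n]) auto
        qed
      qed
      define c0 where "c0 = l - e/2"
      have "\<Phi> c0 = c0" using fx e by (simp add: c0_def)
      then obtain \<delta> where \<delta>: "\<delta> > 0" "\<forall>u. u \<noteq> c0 \<and> \<bar>u - c0\<bar> < \<delta> \<longrightarrow> \<Phi> u \<noteq> u"
        using isol by blast
      define u where "u = c0 - min \<delta> (e/2) / 2"
      have "\<Phi> u = u" using fx \<delta> e by (simp add: u_def c0_def)
      moreover have "u \<noteq> c0 \<and> \<bar>u - c0\<bar> < \<delta>" using \<delta> e by (auto simp: u_def min_def)
      ultimately show False using \<delta>(2) by blast
    qed
  qed
  thus ?thesis by blast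
qed


locale ap =
  fixes \<tau> :: real and f P R :: "real \<Rightarrow> real \<Rightarrow> real"
  assumes tau: "\<tau> > 0" and reg: "regular f"
    and dec: "asympt_periodic_decomp \<tau> f P R"
    and iso: "periodic_solutions_isolated \<tau> P"
begin

lemma decf: "t \<ge> 0 \<Longrightarrow> f t x = P t x + R t x"
  using dec unfolding asympt_periodic_decomp_def by blast

lemma decR: "compact K \<Longrightarrow> e > 0 \<Longrightarrow> \<exists>T. \<forall>t\<ge>T. \<forall>x\<in>K. \<bar>R t x\<bar> < e"
  using dec unfolding asympt_periodic_decomp_def by blast

lemma contP: "cont_RR P"
  using dec unfolding asympt_periodic_decomp_def by blast

lemma P_per: "t \<ge> 0 \<Longrightarrow> P (t + real n * \<tau>) x = P t x"
proof (induction n)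
  case 0 then show ?case by simp
next
  case (Suc n)
  have "P (t + real (Suc n) * \<tau>) x = P ((t + real n * \<tau>) + \<tau>) x"
    by (simp add: algebra_simps)
  also have "\<dots> = P (t + real n * \<tau>) x"
  proof -
    have "t + real n * \<tau> \<ge> 0" using Suc.prems tau by simp
    thus ?thesis using dec unfolding asympt_periodic_decomp_def by blast
  qed
  finally show ?case using Suc by simp
qed

lemma shift_hull: assumes "a \<ge> 0" shows "shift a P \<in> hull_H f"
proof -
  have cP: "continuous_on ({0..} \<times> UNIV) (\<lambda>(t,x). P t x)"
    using dec unfolding asympt_periodic_decomp_def cont_RR_def by blast
  have cc: "continuous_on ({0..} \<times> UNIV) (\<lambda>z. (\<lambda>(t,x). P t x) ((\<lambda>z. (fst z + a, snd z)) z))"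
  proof (rule continuous_on_compose2[OF cP])
    show "continuous_on ({0..} \<times> UNIV) (\<lambda>z::real\<times>real. (fst z + a, snd z))"
      by (intro continuous_intros)
    show "(\<lambda>z::real\<times>real. (fst z + a, snd z)) ` ({0..} \<times> UNIV) \<subseteq> {0..} \<times> UNIV"
      using assms by auto
  qed
  have eq: "(\<lambda>(t,x). shift a P t x) = (\<lambda>z. (\<lambda>(t,x). P t x) ((\<lambda>z. (fst z + a, snd z)) z))"
    by (rule ext) (simp add: shift_def split_beta)
  have c: "cont_RR (shift a P)" unfolding cont_RR_def eq by (rule cc)
  have "\<exists>h\<ge>0. \<forall>(t,x)\<in>K. \<bar>shift h f t x - shift a P t x\<bar> < e"
    if K: "compact K" "K \<subseteq> {0..} \<times> UNIV" and e: "e > 0" for K e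
  proof -
    have "compact (snd ` K)" using compact_continuous_image[OF continuous_on_snd[OF continuous_on_id] K(1)] by simp
    then obtain T where T: "\<forall>t\<ge>T. \<forall>x\<in>snd ` K. \<bar>R t x\<bar> < e"
      using decR[OF _ e] by blast
    obtain n :: nat where n: "max T 0 / \<tau> \<le> n" using real_arch_simple by blast
    hence nT: "max T 0 \<le> real n * \<tau>" using tau by (simp add: field_simps)
    show ?thesis
    proof (intro exI[of _ "a + real n * \<tau>"] conjI ballI)
      show "0 \<le> a + real n * \<tau>" using assms tau by simp
      fix z assume z: "z \<in> K"
      obtain t x where zz: "z = (t,x)" by (cases z)
      have "(t,x) \<in> {0..} \<times> UNIV" using K(2) z zz by blast
      hence t0: "t \<ge> 0" by simp
      have "shift (a + real n * \<tau>) f t x - shift a P t x = R (t + a + real n * \<tau>) x"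
      proof -
        have "f (t + (a + real n * \<tau>)) x = P (t + a + real n * \<tau>) x + R (t + a + real n * \<tau>) x"
          using decf[of "t + (a + real n * \<tau>)" x] t0 assms nT by (simp add: add.assoc)
        moreover have "P (t + a + real n * \<tau>) x = P (t + a) x" using P_per t0 assms by simp
        ultimately show ?thesis unfolding shift_def by (simp add: add.assoc)
      qed
      moreover have "\<bar>R (t + a + real n * \<tau>) x\<bar> < e"
      proof -
        have "x \<in> snd ` K" by (rule image_eqI[of _ _ z]) (use z zz in auto)
        moreover have "t + a + real n * \<tau> \<ge> T" using t0 assms nT by simp
        ultimately show ?thesis using T by blast
      qed
      ultimately show "(case z of (t, x) \<Rightarrow> \<bar>shift (a + real n * \<tau>) f t x - shift a P t x\<bar> < e)"
        using zz by simp
    qed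
  qed
  thus ?thesis using c unfolding hull_H_def by blast
qed

lemma reg_hull: "g \<in> hull_H f \<Longrightarrow> \<exists>y. is_solution g v y \<and> (\<forall>z. is_solution g v z \<longrightarrow> (\<forall>t\<ge>0. z t = y t))"
  using reg unfolding regular_def by blast

definition sol_from :: "(real\<Rightarrow>real\<Rightarrow>real) \<Rightarrow> real \<Rightarrow> (real\<Rightarrow>real) \<Rightarrow> bool" where
  "sol_from g a z \<longleftrightarrow> (\<forall>t\<ge>a. (z has_real_derivative g t (z t)) (at t within {a..}))"

lemma is_solution_iff: "is_solution g v z \<longleftrightarrow> z 0 = v \<and> sol_from g 0 z"
  unfolding is_solution_def sol_from_def by simp

lemma translate_deriv:
  assumes "(z has_real_derivative D) (at (s + c) within {a..})"
  shows "((\<lambda>s. z (s + c)) has_real_derivative D) (at s within {a - c..})"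
proof -
  have im: "(\<lambda>s. s + c) ` {a - c..} = {a..}"
  proof
    show "(\<lambda>s. s + c) ` {a - c..} \<subseteq> {a..}" by auto
    show "{a..} \<subseteq> (\<lambda>s. s + c) ` {a - c..}"
    proof
      fix x assume xa: "x \<in> {a..}"
      show "x \<in> (\<lambda>s. s + c) ` {a - c..}" by (rule image_eqI[where x="x - c"]) (use xa in auto)
    qed
  qed
  have d1: "(z has_real_derivative D) (at ((\<lambda>s. s + c) s) within ((\<lambda>s. s + c) ` {a - c..}))"
    using assms unfolding im by simp
  have d2: "((\<lambda>s. s + c) has_real_derivative 1) (at s within {a - c..})"
    using DERIV_add[OF DERIV_ident DERIV_const[of c]] by simp
  have "(z \<circ> (\<lambda>s. s + c) has_real_derivative D * 1) (at s within {a - c..})"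
    by (rule DERIV_image_chain[OF d1 d2])
  thus ?thesis by (simp add: o_def)
qed

lemma shift_sol: assumes "sol_from g a z" shows "is_solution (shift a g) (z a) (\<lambda>s. z (s + a))"
  unfolding is_solution_def
proof (intro conjI allI impI)
  fix t :: real assume "t \<ge> 0"
  hence "(z has_real_derivative g (t + a) (z (t + a))) (at (t + a) within {a..})"
    using assms unfolding sol_from_def by auto
  from translate_deriv[OF this] show "((\<lambda>s. z (s + a)) has_real_derivative shift a g t (z (t + a))) (at t within {0..})"
    by (simp add: shift_def)
qed simp

lemma unshift_sol: assumes "is_solution (shift a g) v w" shows "sol_from g a (\<lambda>t. w (t - a))" "w (a - a) = v"
proof -
  show "sol_from g a (\<lambda>t. w (t - a))" unfolding sol_from_def
  proof (intro allI impI)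
    fix t :: real assume "t \<ge> a"
    hence "(w has_real_derivative shift a g (t - a) (w (t - a))) (at (t + - a) within {0..})"
      using assms unfolding is_solution_def by auto
    from translate_deriv[OF this] show "((\<lambda>t. w (t - a)) has_real_derivative g t (w (t - a))) (at t within {a..})"
      by (simp add: shift_def)
  qed
  show "w (a - a) = v" using assms unfolding is_solution_def by simp
qed

lemma uniq_from:
  assumes "a \<ge> 0" "sol_from P a z1" "sol_from P a z2" "z1 a = z2 a" "t \<ge> a"
  shows "z1 t = z2 t"
proof -
  obtain y where y: "\<forall>z. is_solution (shift a P) (z1 a) z \<longrightarrow> (\<forall>t\<ge>0. z t = y t)"
    using reg_hull[OF shift_hull[OF assms(1)]] by blast
  have h: "\<And>z. is_solution (shift a P) (z1 a) z \<Longrightarrow> z (t - a) = y (t - a)"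
    using y assms(5) by auto
  have s1: "is_solution (shift a P) (z1 a) (\<lambda>s. z1 (s + a))" and s2: "is_solution (shift a P) (z1 a) (\<lambda>s. z2 (s + a))"
    using shift_sol[OF assms(2)] shift_sol[OF assms(3)] assms(4) by auto
  have "z1 t = y (t - a)" using h[OF s1] by simp
  moreover have "z2 t = y (t - a)" using h[OF s2] by simp
  ultimately show ?thesis by simp
qed

lemma exist_from: assumes "a \<ge> 0" shows "\<exists>z. sol_from P a z \<and> z a = v"
proof -
  obtain y where "is_solution (shift a P) v y"
    using reg_hull[OF shift_hull[OF assms(1)]] by blast
  from unshift_sol[OF this] show ?thesis by auto
qed

definition phi :: "real \<Rightarrow> real \<Rightarrow> real" where "phi v = (SOME z. is_solution P v z)"

lemma phi_sol: "is_solution P v (phi v)"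
proof -
  have "shift 0 P = P" by (simp add: shift_def)
  hence h0: "P \<in> hull_H f" using shift_hull[of 0] by simp
  have "\<exists>z. is_solution P v z" using reg_hull[OF h0] by blast
  thus ?thesis unfolding phi_def by (rule someI_ex)
qed

lemma phi0: "phi v 0 = v" and phi_from: "sol_from P 0 (phi v)"
  using phi_sol[of v] by (auto simp: is_solution_iff)

lemma phi_unique: "is_solution P v z \<Longrightarrow> t \<ge> 0 \<Longrightarrow> z t = phi v t"
  using uniq_from[of 0 z "phi v" t] phi0 phi_from by (auto simp: is_solution_iff)

lemma sol_from_cont: "sol_from g a z \<Longrightarrow> continuous_on {a..} z"
  unfolding sol_from_def continuous_on_eq_continuous_within
  by (auto intro: DERIV_continuous)

lemma sol_from_mono: assumes "sol_from g a z" "a \<le> b" shows "sol_from g b z"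
  unfolding sol_from_def
proof (intro allI impI)
  fix t assume "b \<le> t"
  hence "(z has_real_derivative g t (z t)) (at t within {a..})" using assms unfolding sol_from_def by auto
  moreover have "{b..} \<subseteq> {a..}" using assms by auto
  ultimately show "(z has_real_derivative g t (z t)) (at t within {b..})" by (rule has_field_derivative_subset)
qed

lemma phi_cont: "continuous_on {0..} (phi v)"
  using sol_from_cont phi_from by blast

lemma phi_mono: assumes "v \<le> v'" "t \<ge> 0" shows "phi v t \<le> phi v' t"
proof (rule ccontr)
  assume "\<not> ?thesis"
  hence lt: "phi v' t - phi v t < 0" by simp
  have c1: "continuous_on {0..t} (phi w)" for w by (rule continuous_on_subset[OF phi_cont]) auto
  have c: "continuous_on {0..t} (\<lambda>s. phi v' s - phi v s)"
    by (intro continuous_on_diff c1)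
  obtain t0 where t0: "0 \<le> t0" "t0 \<le> t" "phi v' t0 - phi v t0 = 0"
    using IVT2'[of "\<lambda>s. phi v' s - phi v s" t 0 0, OF _ _ _ c] lt assms phi0 by auto
  have "phi v' t = phi v t"
    by (rule uniq_from[of t0]) (use t0 sol_from_mono[OF phi_from] in auto)
  with lt show False by simp
qed

definition sol_on :: "(real\<Rightarrow>real\<Rightarrow>real) \<Rightarrow> real \<Rightarrow> real \<Rightarrow> (real\<Rightarrow>real) \<Rightarrow> bool" where
  "sol_on g a b z \<longleftrightarrow> (\<forall>t\<in>{a..b}. (z has_real_derivative g t (z t)) (at t within {a..b}))"

lemma loc_uniq:
  assumes T: "T > 0" and z: "sol_on P 0 T z" and s: "s \<in> {0..T}"
  shows "z s = phi (z 0) s"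
proof -
  obtain \<psi> where psi: "sol_from P T \<psi>" "\<psi> T = z T" using exist_from[of T "z T"] T by auto
  define w where "w = (\<lambda>s. if s \<le> T then z s else \<psi> s)"
  have wz: "x \<in> {0..T} \<Longrightarrow> w x = z x" for x by (auto simp: w_def)
  have wpsi: "x \<in> {T..} \<Longrightarrow> w x = \<psi> x" for x using psi by (auto simp: w_def)
  have d1: "(w has_real_derivative P t (w t)) (at t within {0..T})" if "t \<in> {0..T}" for t
  proof -
    have "(z has_real_derivative P t (z t)) (at t within {0..T})" using z that unfolding sol_on_def by blast
    then have "(w has_real_derivative P t (z t)) (at t within {0..T})"
      by (rule has_field_derivative_transform_within[where d=1]) (use that wz in auto)
    thus ?thesis using wz that by simp
  qed
  have d2: "(w has_real_derivative P t (w t)) (at t within {T..})" if "t \<ge> T" for t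
  proof -
    have "(\<psi> has_real_derivative P t (\<psi> t)) (at t within {T..})" using psi that unfolding sol_from_def by blast
    then have "(w has_real_derivative P t (\<psi> t)) (at t within {T..})"
      by (rule has_field_derivative_transform_within[where d=1]) (use that wpsi in auto)
    thus ?thesis using wpsi that by simp
  qed
  have "sol_from P 0 w" unfolding sol_from_def
  proof (intro allI impI)
    fix t :: real assume t0: "t \<ge> 0"
    consider "t < T" | "t = T" | "t > T" by linarith
    thus "(w has_real_derivative P t (w t)) (at t within {0..})"
    proof cases
      case 1
      have "at t within {0..} = at t within {0..T}"
        by (rule at_within_nhd[of _ "{..<T}"]) (use 1 in auto)
      thus ?thesis using d1[of t] 1 t0 by simp
    next
      case 3
      have "at t within {0..} = at t within {T..}"
        by (rule at_within_nhd[of _ "{T<..}"]) (use 3 T in auto)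
      thus ?thesis using d2[of t] 3 by simp
    next
      case 2
      have u: "{0..} = {0..T} \<union> {T..}" using T by auto
      show ?thesis
        using d1[of t] d2[of t] 2 T unfolding u has_field_derivative_iff Lim_within_Un by auto
    qed
  qed
  moreover have "w 0 = z 0" using T by (simp add: w_def)
  ultimately have "w s = phi (z 0) s"
    using uniq_from[of 0 w "phi (z 0)" s] phi0 phi_from s by auto
  thus ?thesis using wz s by simp
qed


lemma Pcompact: "compact ({0..T::real} \<times> {-M..M::real})" by (intro compact_Times compact_Icc)

lemma Pcont_K: "continuous_on ({0..T} \<times> {-M..M}) (\<lambda>(t,x). P t x)"
  using contP unfolding cont_RR_def by (rule continuous_on_subset) auto

lemma Pbound: "\<exists>B>0. \<forall>s\<in>{0..T}. \<forall>x. \<bar>x\<bar> \<le> M \<longrightarrow> \<bar>P s x\<bar> \<le> B"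
proof -
  have cK: "compact ((\<lambda>(t,x). P t x) ` ({0..T} \<times> {-M..M}))"
    by (intro compact_continuous_image Pcont_K Pcompact)
  obtain B where B: "\<forall>y \<in> (\<lambda>(t,x). P t x) ` ({0..T} \<times> {-M..M}). norm y \<le> B"
    using compact_imp_bounded[OF cK] unfolding bounded_iff by blast
  have "\<bar>P s x\<bar> \<le> max B 1" if "s \<in> {0..T}" "\<bar>x\<bar> \<le> M" for s x
  proof -
    have "(s,x) \<in> {0..T} \<times> {-M..M}" using that by auto
    hence "norm ((\<lambda>(t,x). P t x) (s,x)) \<le> B" using B by blast
    thus ?thesis by simp
  qed
  thus ?thesis by (intro exI[of _ "max B 1"]) auto
qed

lemma Puc: assumes "\<epsilon> > 0"
  shows "\<exists>d>0. \<forall>s\<in>{0..T}. \<forall>x y. \<bar>x\<bar> \<le> M \<and> \<bar>y\<bar> \<le> M \<and> \<bar>x - y\<bar> < d \<longrightarrow> \<bar>P s x - P s y\<bar> < \<epsilon>"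
proof -
  have "uniformly_continuous_on ({0..T} \<times> {-M..M}) (\<lambda>(t,x). P t x)"
    by (rule compact_uniformly_continuous[OF Pcont_K Pcompact])
  then obtain d where d: "d > 0" "\<forall>p\<in>{0..T} \<times> {-M..M}. \<forall>q\<in>{0..T} \<times> {-M..M}. dist q p < d \<longrightarrow>
      dist ((\<lambda>(t,x). P t x) q) ((\<lambda>(t,x). P t x) p) < \<epsilon>"
    using assms unfolding uniformly_continuous_on_def by blast
  show ?thesis
  proof (intro exI[of _ d] conjI ballI allI impI)
    fix s x y assume s: "s \<in> {0..T}" and xy: "\<bar>x\<bar> \<le> M \<and> \<bar>y\<bar> \<le> M \<and> \<bar>x - y\<bar> < d"
    have "dist (s,x) (s,y) < d" using xy by (simp add: dist_Pair_Pair dist_real_def)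
    moreover have "(s,x) \<in> {0..T} \<times> {-M..M}" "(s,y) \<in> {0..T} \<times> {-M..M}" using s xy by auto
    ultimately have "dist (P s x) (P s y) < \<epsilon>" using d(2)[rule_format, of "(s,y)" "(s,x)"] by simp
    thus "\<bar>P s x - P s y\<bar> < \<epsilon>" by (simp add: dist_real_def)
  qed (use d in auto)
qed

lemma kamke:
  assumes T: "T > 0" and e: "e > 0"
    and der: "\<And>n s. s \<in> {0..T} \<Longrightarrow> (z n has_real_derivative g n s (z n s)) (at s within {0..T})"
    and bnd: "\<And>n s. s \<in> {0..T} \<Longrightarrow> \<bar>z n s\<bar> \<le> M"
    and conv: "\<And>e. e > 0 \<Longrightarrow> \<exists>N. \<forall>n\<ge>N. \<forall>s\<in>{0..T}. \<forall>x. \<bar>x\<bar> \<le> M \<longrightarrow> \<bar>g n s x - P s x\<bar> < e"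
    and init: "(\<lambda>n. z n 0) \<longlonglongrightarrow> v"
  shows "\<exists>N. \<forall>n\<ge>N. \<forall>s\<in>{0..T}. \<bar>z n s - phi v s\<bar> < e"
proof (rule ccontr)
  assume nt: "\<not> ?thesis"
  define Bad where "Bad = {n. \<exists>s\<in>{0..T}. \<bar>z n s - phi v s\<bar> \<ge> e}"
  have "\<exists>n\<ge>N. n \<in> Bad" for N
  proof -
    have "\<not> (\<forall>n\<ge>N. \<forall>s\<in>{0..T}. \<bar>z n s - phi v s\<bar> < e)" using nt by blast
    then obtain n s where ns: "n \<ge> N" "s \<in> {0..T}" "\<not> \<bar>z n s - phi v s\<bar> < e" by blast
    have "\<exists>s\<in>{0..T}. \<bar>z n s - phi v s\<bar> \<ge> e" using ns(2,3) by (intro bexI[of _ s]) auto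
    hence "n \<in> Bad" unfolding Bad_def by simp
    thus ?thesis using ns(1) by blast
  qed
  hence "infinite Bad" using infinite_nat_iff_unbounded_le by blast
  then obtain r :: "nat \<Rightarrow> nat" where r: "strict_mono r" "\<And>n. r n \<in> Bad"
    using infinite_enumerate by blast
  obtain N0 where N0: "\<forall>n\<ge>N0. \<forall>s\<in>{0..T}. \<forall>x. \<bar>x\<bar> \<le> M \<longrightarrow> \<bar>g n s x - P s x\<bar> < 1"
    using conv[of 1] by auto
  obtain B where B: "B > 0" "\<forall>s\<in>{0..T}. \<forall>x. \<bar>x\<bar> \<le> M \<longrightarrow> \<bar>P s x\<bar> \<le> B"
    using Pbound[of T M] by blast
  define r' where "r' j = r (j + N0)" for j
  have r'N: "r' j \<ge> N0" for j using seq_suble[OF r(1), of "j+N0"] by (simp add: r'_def)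
  define F where "F j = z (r' j)" for j
  have Flip: "\<bar>F j s - F j s'\<bar> \<le> (B+1) * \<bar>s - s'\<bar>" if s: "s \<in> {0..T}" "s' \<in> {0..T}" for j s s'
  proof -
    have "norm (F j s - F j s') \<le> (B+1) * norm (s - s')"
    proof (rule field_differentiable_bound[where f'="\<lambda>x. g (r' j) x (F j x)" and S="{0..T}"])
      show "convex {0..T::real}" by simp
      fix x :: real assume x: "x \<in> {0..T}"
      show "(F j has_field_derivative g (r' j) x (F j x)) (at x within {0..T})"
        using der[OF x] by (simp add: F_def)
      have "\<bar>g (r' j) x (F j x) - P x (F j x)\<bar> < 1"
        using N0 r'N[of j] x bnd[OF x, of "r' j"] by (simp add: F_def)
      moreover have "\<bar>P x (F j x)\<bar> \<le> B" using B(2) x bnd[OF x, of "r' j"] by (simp add: F_def)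
      ultimately show "norm (g (r' j) x (F j x)) \<le> B + 1" by simp
    qed (use s in auto)
    thus ?thesis by simp
  qed
  have AA1: "\<And>n x. x \<in> {0..T} \<Longrightarrow> norm (F n x) \<le> M" using bnd by (simp add: F_def)
  have AA2: "\<exists>d. 0 < d \<and> (\<forall>n y. y \<in> {0..T} \<and> norm (x - y) < d \<longrightarrow> norm (F n x - F n y) < \<epsilon>)"
    if x: "x \<in> {0..T}" and ep: "0 < \<epsilon>" for x \<epsilon>
  proof (intro exI[of _ "\<epsilon> / (B+1)"] conjI allI impI)
    show "0 < \<epsilon> / (B+1)" using B ep by simp
    fix n y assume y: "y \<in> {0..T} \<and> norm (x - y) < \<epsilon> / (B + 1)"
    have "\<bar>F n x - F n y\<bar> \<le> (B+1) * \<bar>x - y\<bar>" using Flip x y by blast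
    also have "\<dots> < (B+1) * (\<epsilon> / (B+1))" using y B by (intro mult_strict_left_mono) auto
    also have "\<dots> = \<epsilon>" using B by simp
    finally show "norm (F n x - F n y) < \<epsilon>" by simp
  qed
  obtain w k where w: "continuous_on {0..T} w" "strict_mono (k :: nat \<Rightarrow> nat)"
      "\<And>e. 0 < e \<Longrightarrow> \<exists>N. \<forall>n x. n \<ge> N \<and> x \<in> {0..T} \<longrightarrow> norm (F (k n) x - w x) < e"
    using Arzela_Ascoli[of "{0..T}" F M, OF compact_Icc AA1 AA2] by blast
  define m where "m n = r' (k n)" for n
  have Gm: "F (k n) = z (m n)" for n by (simp add: F_def m_def)
  have msm: "strict_mono m"
    using r(1) w(2) unfolding strict_mono_def m_def r'_def by simp
  have mge: "m n \<ge> n" for n using seq_suble[OF msm] by simp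
  have mN: "m n \<ge> N0" for n using r'N by (simp add: m_def)
  have pw: "(\<lambda>n. z (m n) x) \<longlonglongrightarrow> w x" if x: "x \<in> {0..T}" for x
    unfolding LIMSEQ_iff
  proof (intro allI impI)
    fix \<epsilon> :: real assume "\<epsilon> > 0"
    then obtain N where "\<forall>n x. n \<ge> N \<and> x \<in> {0..T} \<longrightarrow> norm (F (k n) x - w x) < \<epsilon>" using w(3) by blast
    thus "\<exists>no. \<forall>n\<ge>no. norm (z (m n) x - w x) < \<epsilon>" using x Gm by auto
  qed
  have wb: "\<bar>w x\<bar> \<le> M" if x: "x \<in> {0..T}" for x
  proof -
    have "(\<lambda>n. \<bar>z (m n) x\<bar>) \<longlonglongrightarrow> \<bar>w x\<bar>" by (rule tendsto_rabs[OF pw[OF x]])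
    moreover have "\<exists>N. \<forall>n\<ge>N. \<bar>z (m n) x\<bar> \<le> M" using bnd[OF x] by blast
    ultimately show ?thesis by (rule LIMSEQ_le_const2)
  qed
  have w0: "w 0 = v"
  proof -
    have "((\<lambda>n. z n 0) \<circ> m) \<longlonglongrightarrow> v" by (rule LIMSEQ_subseq_LIMSEQ[OF init msm])
    hence "(\<lambda>n. z (m n) 0) \<longlonglongrightarrow> v" by (simp add: o_def)
    moreover have "(\<lambda>n. z (m n) 0) \<longlonglongrightarrow> w 0" using pw T by simp
    ultimately show ?thesis using LIMSEQ_unique by blast
  qed
  have nle: "\<forall>\<^sub>F n in sequentially. \<forall>x\<in>{0..T}. \<forall>h. norm (g (m n) x (z (m n) x) * h - P x (w x) * h) \<le> \<epsilon> * norm h"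
    if ep: "\<epsilon> > 0" for \<epsilon>
  proof -
    obtain N1 where N1: "\<forall>n\<ge>N1. \<forall>s\<in>{0..T}. \<forall>x. \<bar>x\<bar> \<le> M \<longrightarrow> \<bar>g n s x - P s x\<bar> < \<epsilon>/2"
      using conv[of "\<epsilon>/2"] ep by auto
    obtain d where d: "d > 0" "\<forall>s\<in>{0..T}. \<forall>x y. \<bar>x\<bar> \<le> M \<and> \<bar>y\<bar> \<le> M \<and> \<bar>x - y\<bar> < d \<longrightarrow> \<bar>P s x - P s y\<bar> < \<epsilon>/2"
      using Puc[of "\<epsilon>/2" T M] ep by auto
    obtain N2 where N2: "\<forall>n x. n \<ge> N2 \<and> x \<in> {0..T} \<longrightarrow> norm (F (k n) x - w x) < d" using w(3) d(1) by blast
    have "\<forall>x\<in>{0..T}. \<forall>h. norm (g (m n) x (z (m n) x) * h - P x (w x) * h) \<le> \<epsilon> * norm h"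
      if n: "n \<ge> max N1 N2" for n
    proof (intro ballI allI)
      fix x h assume x: "x \<in> {0..T}"
      have zb: "\<bar>z (m n) x\<bar> \<le> M" using bnd[OF x] .
      have a1: "\<bar>g (m n) x (z (m n) x) - P x (z (m n) x)\<bar> < \<epsilon>/2"
        using N1 mge[of n] n x zb by auto
      have "\<bar>z (m n) x - w x\<bar> < d" using N2 n x Gm by fastforce
      hence a2: "\<bar>P x (z (m n) x) - P x (w x)\<bar> < \<epsilon>/2" using d(2) x zb wb[OF x] by blast
      have "\<bar>g (m n) x (z (m n) x) - P x (w x)\<bar> \<le> \<epsilon>" using a1 a2 by linarith
      hence "\<bar>g (m n) x (z (m n) x) - P x (w x)\<bar> * \<bar>h\<bar> \<le> \<epsilon> * \<bar>h\<bar>" by (rule mult_right_mono) simp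
      thus "norm (g (m n) x (z (m n) x) * h - P x (w x) * h) \<le> \<epsilon> * norm h"
        by (simp add: abs_mult[symmetric] left_diff_distrib)
    qed
    thus ?thesis unfolding eventually_sequentially by blast
  qed
  have derm: "((\<lambda>x. z (m n) x) has_derivative (\<lambda>h. g (m n) x (z (m n) x) * h)) (at x within {0..T})"
    if x: "x \<in> {0..T}" for n x
    using der[OF x, of "m n"] unfolding has_field_derivative_def by simp
  obtain g0 where g0: "\<forall>x\<in>{0..T}. (\<lambda>n. z (m n) x) \<longlonglongrightarrow> g0 x \<and> (g0 has_derivative (\<lambda>h. P x (w x) * h)) (at x within {0..T})"
    using has_derivative_sequence[of "{0..T}" "\<lambda>n x. z (m n) x" "\<lambda>n x h. g (m n) x (z (m n) x) * h"
        "\<lambda>x h. P x (w x) * h" 0 "w 0", OF convex_real_interval(5) derm nle _ pw] T by auto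
  have sol: "sol_on P 0 T w" unfolding sol_on_def
  proof
    fix x assume x: "x \<in> {0..T}"
    have eqg: "g0 y = w y" if "y \<in> {0..T}" for y using g0 pw that LIMSEQ_unique by blast
    have "(g0 has_real_derivative P x (w x)) (at x within {0..T})"
      using g0 x unfolding has_field_derivative_def by simp
    thus "(w has_real_derivative P x (w x)) (at x within {0..T})"
      by (rule has_field_derivative_transform_within[where d=1]) (use x eqg in auto)
  qed
  have wphi: "w s = phi v s" if "s \<in> {0..T}" for s using loc_uniq[OF T sol that] w0 by simp
  obtain N where N: "\<forall>n x. n \<ge> N \<and> x \<in> {0..T} \<longrightarrow> norm (F (k n) x - w x) < e" using w(3) e by blast
  have "m N \<in> Bad" using r(2) by (simp add: m_def r'_def)
  then obtain s where s: "s \<in> {0..T}" "\<bar>z (m N) s - phi v s\<bar> \<ge> e" unfolding Bad_def by blast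
  have "\<bar>z (m N) s - w s\<bar> < e" using N s(1) Gm by fastforce
  with s wphi[OF s(1)] show False by simp
qed

lemma P_tau: "t \<ge> 0 \<Longrightarrow> P (t + \<tau>) x = P t x"
  using P_per[of t 1 x] by simp

lemma phi_bnd: "\<exists>M2. \<forall>v s. \<bar>v\<bar> \<le> M \<longrightarrow> s \<in> {0..T} \<longrightarrow> \<bar>phi v s\<bar> \<le> M2"
proof -
  have c: "continuous_on {0..T} (phi u)" for u by (rule continuous_on_subset[OF phi_cont]) auto
  have cb: "\<exists>A. \<forall>s\<in>{0..T}. \<bar>phi u s\<bar> \<le> A" for u
  proof -
    have cc: "compact (phi u ` {0..T})" by (rule compact_continuous_image[OF c compact_Icc])
    obtain A where A: "\<forall>y\<in>phi u ` {0..T}. norm y \<le> A" using compact_imp_bounded[OF cc] unfolding bounded_iff by blast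
    have "\<bar>phi u s\<bar> \<le> A" if s: "s \<in> {0..T}" for s
    proof -
      have "phi u s \<in> phi u ` {0..T}" using s by (rule imageI)
      thus ?thesis using A s by simp
    qed
    thus ?thesis by blast
  qed
  obtain A1 where A1: "\<forall>s\<in>{0..T}. \<bar>phi M s\<bar> \<le> A1" using cb by blast
  obtain A2 where A2: "\<forall>s\<in>{0..T}. \<bar>phi (-M) s\<bar> \<le> A2" using cb by blast
  have "\<bar>phi v s\<bar> \<le> max A1 A2" if v: "\<bar>v\<bar> \<le> M" and s: "s \<in> {0..T}" for v s
  proof -
    have "phi v s \<le> phi M s" using phi_mono[of v M s] v s by simp
    moreover have "phi (-M) s \<le> phi v s" using phi_mono[of "-M" v s] v s by simp
    moreover have "\<bar>phi M s\<bar> \<le> A1" "\<bar>phi (-M) s\<bar> \<le> A2" using A1 A2 s by auto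
    ultimately show ?thesis by linarith
  qed
  thus ?thesis by blast
qed

lemma phi_kamke:
  assumes T: "T > 0" and e: "e > 0" and vb: "\<And>n. \<bar>v n\<bar> \<le> M" and init: "v \<longlonglongrightarrow> w"
  shows "\<exists>N. \<forall>n\<ge>N. \<forall>s\<in>{0..T}. \<bar>phi (v n) s - phi w s\<bar> < e"
proof -
  obtain M2 where M2: "\<forall>v s. \<bar>v\<bar> \<le> M \<longrightarrow> s \<in> {0..T} \<longrightarrow> \<bar>phi v s\<bar> \<le> M2" using phi_bnd by blast
  show ?thesis
  proof (rule kamke[where g="\<lambda>n. P" and M=M2, OF T e])
    fix n s assume s: "s \<in> {0..T}"
    have "(phi (v n) has_real_derivative P s (phi (v n) s)) (at s within {0..})"
      using phi_from s unfolding sol_from_def by auto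
    thus "(phi (v n) has_real_derivative P s (phi (v n) s)) (at s within {0..T})"
      by (rule has_field_derivative_subset) auto
    show "\<bar>phi (v n) s\<bar> \<le> M2" using M2 vb s by blast
  next
    fix e :: real assume "e > 0"
    thus "\<exists>N. \<forall>n\<ge>N. \<forall>s\<in>{0..T}. \<forall>x. \<bar>x\<bar> \<le> M2 \<longrightarrow> \<bar>P s x - P s x\<bar> < e" by simp
  next
    show "(\<lambda>n. phi (v n) 0) \<longlonglongrightarrow> w" using init by (simp add: phi0)
  qed
qed

lemma main_loc:
  assumes ysol: "is_solution f u0 y" and bd: "bounded (y ` {0..})"
  shows "\<exists>p. continuous_on {0..} p \<and> (\<forall>t\<ge>0. p (t + \<tau>) = p t) \<and> ((\<lambda>t. y t - p t) \<longlongrightarrow> 0) at_top"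
proof -
  obtain M where M: "\<forall>z\<in>y ` {0..}. norm z \<le> M" using bd unfolding bounded_iff by blast
  have yM: "\<bar>y t\<bar> \<le> M" if "t \<ge> 0" for t using M that by auto
  define x where "x n = y (real n * \<tau>)" for n
  have xM: "\<bar>x n\<bar> \<le> M" for n unfolding x_def using tau by (intro yM) simp
  have yder: "((\<lambda>s. y (s + c)) has_real_derivative f (s + c) (y (s + c))) (at s within {0..\<tau>})"
    if c: "c \<ge> 0" and s: "s \<in> {0..\<tau>}" for c s
  proof -
    have "(y has_real_derivative f (s + c) (y (s + c))) (at (s + c) within {0..})"
      using ysol c s unfolding is_solution_def by auto
    from translate_deriv[OF this] have "((\<lambda>s. y (s + c)) has_real_derivative f (s + c) (y (s + c))) (at s within {0 - c..})" .
    thus ?thesis by (rule has_field_derivative_subset) (use c in auto)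
  qed
  have fconv: "\<exists>N. \<forall>n\<ge>N. \<forall>s\<in>{0..\<tau>}. \<forall>z. \<bar>z\<bar> \<le> M \<longrightarrow> \<bar>f (s + real (m n) * \<tau>) z - P s z\<bar> < e"
    if e: "e > 0" and mge: "\<And>n. m n \<ge> n" for e and m :: "nat \<Rightarrow> nat"
  proof -
    obtain T0 where T0: "\<forall>t\<ge>T0. \<forall>z\<in>{-M..M}. \<bar>R t z\<bar> < e" using decR[OF compact_Icc e] by blast
    obtain N :: nat where N: "max T0 0 / \<tau> \<le> N" using real_arch_simple by blast
    hence NT: "max T0 0 \<le> real N * \<tau>" using tau by (simp add: field_simps)
    have "\<bar>f (s + real (m n) * \<tau>) z - P s z\<bar> < e"
      if n: "n \<ge> N" and s: "s \<in> {0..\<tau>}" and z: "\<bar>z\<bar> \<le> M" for n s z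
    proof -
      have "real N * \<tau> \<le> real (m n) * \<tau>" using mge[of n] n tau by (intro mult_right_mono) auto
      hence big: "s + real (m n) * \<tau> \<ge> T0" "s + real (m n) * \<tau> \<ge> 0" using NT s by auto
      have "f (s + real (m n) * \<tau>) z = P (s + real (m n) * \<tau>) z + R (s + real (m n) * \<tau>) z"
        using decf big(2) by blast
      moreover have "P (s + real (m n) * \<tau>) z = P s z" using P_per s by simp
      moreover have "\<bar>R (s + real (m n) * \<tau>) z\<bar> < e"
      proof -
        have zK: "z \<in> {-M..M}" using z by (auto simp: abs_le_iff)
        show ?thesis using T0 big(1) zK by blast
      qed
      ultimately show ?thesis by simp
    qed
    thus ?thesis by blast
  qed
  obtain M2 where M2: "\<forall>v s. \<bar>v\<bar> \<le> M \<longrightarrow> s \<in> {0..\<tau>} \<longrightarrow> \<bar>phi v s\<bar> \<le> M2" using phi_bnd by blast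
  have star: "\<exists>N. \<forall>n\<ge>N. \<forall>s\<in>{0..\<tau>}. \<bar>y (s + real n * \<tau>) - phi (x n) s\<bar> < e" if e: "e > 0" for e
  proof (rule ccontr)
    assume nt: "\<not> ?thesis"
    define Bad where "Bad = {n. \<exists>s\<in>{0..\<tau>}. \<bar>y (s + real n * \<tau>) - phi (x n) s\<bar> \<ge> e}"
    have "\<exists>n\<ge>N. n \<in> Bad" for N
    proof -
      have "\<not> (\<forall>n\<ge>N. \<forall>s\<in>{0..\<tau>}. \<bar>y (s + real n * \<tau>) - phi (x n) s\<bar> < e)" using nt by blast
      then obtain n s where ns: "n \<ge> N" "s \<in> {0..\<tau>}" "\<not> \<bar>y (s + real n * \<tau>) - phi (x n) s\<bar> < e" by blast
      have "\<exists>s\<in>{0..\<tau>}. \<bar>y (s + real n * \<tau>) - phi (x n) s\<bar> \<ge> e" using ns(2,3) by (intro bexI[of _ s]) auto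
      hence "n \<in> Bad" unfolding Bad_def by simp
      thus ?thesis using ns(1) by blast
    qed
    hence "infinite Bad" using infinite_nat_iff_unbounded_le by blast
    then obtain r :: "nat \<Rightarrow> nat" where r: "strict_mono r" "\<And>n. r n \<in> Bad"
      using infinite_enumerate by blast
    have "bounded (range (x \<circ> r))" unfolding bounded_iff using xM by auto
    then obtain v q where q: "strict_mono (q :: nat \<Rightarrow> nat)" "((x \<circ> r) \<circ> q) \<longlonglongrightarrow> v"
      using bounded_imp_convergent_subsequence by blast
    define m where "m n = r (q n)" for n
    have msm: "strict_mono m" using r(1) q(1) unfolding strict_mono_def m_def by simp
    have mge: "m n \<ge> n" for n using seq_suble[OF msm] by simp
    have xm: "(\<lambda>n. x (m n)) \<longlonglongrightarrow> v" using q(2) by (simp add: o_def m_def)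
    have e2: "e/2 > 0" using e by simp
    obtain N1 where N1: "\<forall>n\<ge>N1. \<forall>s\<in>{0..\<tau>}. \<bar>y (s + real (m n) * \<tau>) - phi v s\<bar> < e/2"
    proof -
      have "\<exists>N. \<forall>n\<ge>N. \<forall>s\<in>{0..\<tau>}. \<bar>(\<lambda>n s. y (s + real (m n) * \<tau>)) n s - phi v s\<bar> < e/2"
      proof (rule kamke[where g="\<lambda>n s z. f (s + real (m n) * \<tau>) z" and M=M, OF tau e2])
        fix n s assume s: "s \<in> {0..\<tau>}"
        show "((\<lambda>s. y (s + real (m n) * \<tau>)) has_real_derivative f (s + real (m n) * \<tau>) (y (s + real (m n) * \<tau>))) (at s within {0..\<tau>})"
          using yder[OF _ s, of "real (m n) * \<tau>"] tau by simp
        show "\<bar>y (s + real (m n) * \<tau>)\<bar> \<le> M" using s tau by (intro yM) simp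
      next
        fix e :: real assume "e > 0"
        thus "\<exists>N. \<forall>n\<ge>N. \<forall>s\<in>{0..\<tau>}. \<forall>z. \<bar>z\<bar> \<le> M \<longrightarrow> \<bar>f (s + real (m n) * \<tau>) z - P s z\<bar> < e"
          using fconv mge by blast
      next
        show "(\<lambda>n. y (0 + real (m n) * \<tau>)) \<longlonglongrightarrow> v" using xm by (simp add: x_def)
      qed
      hence "\<exists>N. \<forall>n\<ge>N. \<forall>s\<in>{0..\<tau>}. \<bar>y (s + real (m n) * \<tau>) - phi v s\<bar> < e/2" by simp
      thus ?thesis using that by blast
    qed
    obtain N2 where N2: "\<forall>n\<ge>N2. \<forall>s\<in>{0..\<tau>}. \<bar>phi (x (m n)) s - phi v s\<bar> < e/2"
      using phi_kamke[OF tau e2 xM xm] by blast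
    define n where "n = max N1 N2"
    have "m n \<in> Bad" using r(2) by (simp add: m_def)
    then obtain s where s: "s \<in> {0..\<tau>}" "\<bar>y (s + real (m n) * \<tau>) - phi (x (m n)) s\<bar> \<ge> e"
      unfolding Bad_def by blast
    have "\<bar>y (s + real (m n) * \<tau>) - phi v s\<bar> < e/2" using N1 s(1) by (simp add: n_def)
    moreover have "\<bar>phi (x (m n)) s - phi v s\<bar> < e/2" using N2 s(1) by (simp add: n_def)
    ultimately show False using s(2) by linarith
  qed
  define \<Phi> where "\<Phi> u = phi u \<tau>" for u
  have close: "(\<lambda>n. x (Suc n) - \<Phi> (x n)) \<longlonglongrightarrow> 0"
    unfolding LIMSEQ_iff
  proof (intro allI impI)
    fix e :: real assume "e > 0"
    then obtain N where N: "\<forall>n\<ge>N. \<forall>s\<in>{0..\<tau>}. \<bar>y (s + real n * \<tau>) - phi (x n) s\<bar> < e" using star by blast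
    have "norm (x (Suc n) - \<Phi> (x n) - 0) < e" if "n \<ge> N" for n
    proof -
      have "\<bar>y (\<tau> + real n * \<tau>) - phi (x n) \<tau>\<bar> < e" using N that tau by simp
      moreover have "x (Suc n) = y (\<tau> + real n * \<tau>)" by (simp add: x_def algebra_simps)
      ultimately show ?thesis by (simp add: \<Phi>_def)
    qed
    thus "\<exists>no. \<forall>n\<ge>no. norm (x (Suc n) - \<Phi> (x n) - 0) < e" by blast
  qed
  have isol: "\<exists>\<delta>>0. \<forall>u. u \<noteq> w \<and> \<bar>u - w\<bar> < \<delta> \<longrightarrow> \<Phi> u \<noteq> u" if "\<Phi> w = w" for w
  proof -
    have "is_solution P w (phi w) \<and> phi w \<tau> = w" using phi_sol that by (simp add: \<Phi>_def)
    then obtain \<delta> where \<delta>: "\<delta> > 0" "\<forall>u z. u \<noteq> w \<and> \<bar>u - w\<bar> < \<delta> \<and> is_solution P u z \<longrightarrow> z \<tau> \<noteq> u"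
      using iso unfolding periodic_solutions_isolated_def by blast
    show ?thesis using \<delta> phi_sol unfolding \<Phi>_def by blast
  qed
  have bx: "bounded (range x)" unfolding bounded_iff using xM by auto
  have mono\<Phi>: "\<And>a b. a \<le> b \<Longrightarrow> \<Phi> a \<le> \<Phi> b" unfolding \<Phi>_def using phi_mono tau by simp
  obtain w where xw: "x \<longlonglongrightarrow> w" using discrete_conv[OF mono\<Phi> close bx isol] by blast
  have unif: "\<exists>N. \<forall>n\<ge>N. \<forall>s\<in>{0..\<tau>}. \<bar>phi (x n) s - phi w s\<bar> < e" if "e > 0" for e
    using phi_kamke[OF tau that xM xw] .
  have "(\<lambda>n. \<Phi> (x n)) \<longlonglongrightarrow> \<Phi> w"
    unfolding LIMSEQ_iff
  proof (intro allI impI)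
    fix e :: real assume "e > 0"
    then obtain N where "\<forall>n\<ge>N. \<forall>s\<in>{0..\<tau>}. \<bar>phi (x n) s - phi w s\<bar> < e" using unif by blast
    hence "\<forall>n\<ge>N. norm (\<Phi> (x n) - \<Phi> w) < e" using tau by (simp add: \<Phi>_def)
    thus "\<exists>no. \<forall>n\<ge>no. norm (\<Phi> (x n) - \<Phi> w) < e" by blast
  qed
  moreover have "(\<lambda>n. \<Phi> (x n)) \<longlonglongrightarrow> w - 0"
  proof -
    have "(\<lambda>n. x (Suc n) - (x (Suc n) - \<Phi> (x n))) \<longlonglongrightarrow> w - 0"
      by (intro tendsto_diff close LIMSEQ_Suc xw)
    thus ?thesis by simp
  qed
  ultimately have "\<Phi> w = w - 0" by (rule LIMSEQ_unique)
  hence fixw: "phi w \<tau> = w" by (simp add: \<Phi>_def)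
  define p where "p = phi w"
  have pper: "p (t + \<tau>) = p t" if t: "t \<ge> 0" for t
  proof -
    have s1: "is_solution (shift \<tau> P) (phi w \<tau>) (\<lambda>s. phi w (s + \<tau>))"
      by (rule shift_sol[OF sol_from_mono[OF phi_from]]) (use tau in simp)
    have "is_solution P w (\<lambda>s. phi w (s + \<tau>))" unfolding is_solution_def
    proof (intro conjI allI impI)
      show "phi w (0 + \<tau>) = w" using fixw by simp
      fix s :: real assume s: "s \<ge> 0"
      have "((\<lambda>s. phi w (s + \<tau>)) has_real_derivative shift \<tau> P s (phi w (s + \<tau>))) (at s within {0..})"
        using s1 s unfolding is_solution_def by blast
      moreover have "shift \<tau> P s (phi w (s + \<tau>)) = P s (phi w (s + \<tau>))" using P_tau s by (simp add: shift_def)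
      ultimately show "((\<lambda>s. phi w (s + \<tau>)) has_real_derivative P s (phi w (s + \<tau>))) (at s within {0..})" by simp
    qed
    from phi_unique[OF this t] show ?thesis by (simp add: p_def)
  qed
  have pper_n: "p (s + real n * \<tau>) = p s" if s: "s \<ge> 0" for s n
  proof (induction n)
    case 0 thus ?case by simp
  next
    case (Suc n)
    have "p (s + real (Suc n) * \<tau>) = p ((s + real n * \<tau>) + \<tau>)" by (simp add: algebra_simps)
    also have "\<dots> = p (s + real n * \<tau>)" using pper s tau by simp
    finally show ?case using Suc by simp
  qed
  have lim: "((\<lambda>t. y t - p t) \<longlongrightarrow> 0) at_top"
    unfolding tendsto_iff eventually_at_top_linorder
  proof (intro allI impI)
    fix e :: real assume e: "e > 0"
    hence e2: "e/2 > 0" by simp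
    obtain N1 where N1: "\<forall>n\<ge>N1. \<forall>s\<in>{0..\<tau>}. \<bar>y (s + real n * \<tau>) - phi (x n) s\<bar> < e/2" using star[OF e2] by blast
    obtain N2 where N2: "\<forall>n\<ge>N2. \<forall>s\<in>{0..\<tau>}. \<bar>phi (x n) s - phi w s\<bar> < e/2" using unif[OF e2] by blast
    have "dist (y t - p t) 0 < e" if t: "t \<ge> real (max N1 N2) * \<tau>" for t
    proof -
      define n where "n = nat \<lfloor>t / \<tau>\<rfloor>"
      have t0: "t \<ge> 0" using t tau by (meson mult_nonneg_nonneg of_nat_0_le_iff order_trans less_imp_le)
      have "t / \<tau> \<ge> real (max N1 N2)" using t tau by (simp add: field_simps)
      hence fl: "\<lfloor>t / \<tau>\<rfloor> \<ge> int (max N1 N2)" by (simp add: le_floor_iff)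
      hence nN: "n \<ge> N1" "n \<ge> N2" unfolding n_def by auto
      have rn: "real n = real_of_int \<lfloor>t / \<tau>\<rfloor>" using fl unfolding n_def by simp
      have "real n \<le> t / \<tau>" "t / \<tau> < real n + 1" unfolding rn by linarith+
      hence "real n * \<tau> \<le> t" "t < real n * \<tau> + \<tau>" using tau by (simp_all add: field_simps)
      define s where "s = t - real n * \<tau>"
      have s: "s \<in> {0..\<tau>}" "t = s + real n * \<tau>" using \<open>real n * \<tau> \<le> t\<close> \<open>t < real n * \<tau> + \<tau>\<close> by (auto simp: s_def)
      have a: "\<bar>y t - phi (x n) s\<bar> < e/2" using N1 nN s by simp
      have b: "\<bar>phi (x n) s - phi w s\<bar> < e/2" using N2 nN s by simp
      have "p t = phi w s" using pper_n[of s n] s by (simp add: p_def)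
      moreover have "\<bar>y t - phi w s\<bar> < e" using a b by linarith
      ultimately show ?thesis by (simp add: dist_real_def)
    qed
    thus "\<exists>N. \<forall>t\<ge>N. dist (y t - p t) 0 < e" by blast
  qed
  show ?thesis
    by (intro exI[of _ p] conjI allI impI lim) (use phi_cont pper in \<open>auto simp: p_def\<close>)
qed

end

theorem mainTheorem15:
  fixes \<tau> u0 :: real and f P R :: "real \<Rightarrow> real \<Rightarrow> real" and y :: "real \<Rightarrow> real"
  assumes "\<tau> > 0"
    and "cont_RR f"
    and "regular f"
    and "asympt_periodic_decomp \<tau> f P R"
    and "periodic_solutions_isolated \<tau> P"
    and "is_solution f u0 y"
    and "bounded (y ` {0..})"
  shows "\<exists>p. continuous_on {0..} p \<and> (\<forall>t\<ge>0. p (t + \<tau>) = p t) \<and>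
           ((\<lambda>t. y t - p t) \<longlongrightarrow> 0) at_top"
proof -
  interpret ap \<tau> f P R using assms(1,3,4,5) by unfold_locales
  show ?thesis by (rule main_loc[OF assms(6,7)])
qed

end
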